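(* Let $m\ge 2$ be an integer, let $x_0,\dots,x_N\in[0,1]$ be distinct nodes, and let $$G(x)=\frac{\operatorname{sign}x}{2}\left(\frac{e^x-e^{-x}}{2}-\sum_{k=1}^{m-1}\frac{x^{2k-1}}{(2k-1)!}\right).$$ Let $S$ be the $m\times(N+1)$ matrix whose rows are $(x_0^{\alpha},\dots,x_N^{\alpha})$ for $\alpha=0,1,\dots,m-2$ and, as last row, $(e^{-x_0},\dots,e^{-x_N})$. Define $$\Phi(\overline{\mathbf C})=2(-1)^m\sum_{\beta=0}^N\sum_{\gamma=0}^N G(x_\beta-x_\gamma)\,\overline C_\beta\overline C_\gamma,\qquad \overline{\mathbf C}=(\overline C_0,\dots,\overline C_N)\in\mathbb R^{N+1}.$$ Then for every nonzero vector $\overline{\mathbf C}\in\mathbb R^{N+1}$ with $S\overline{\mathbf C}=0$, one has $\Phi(\overline{\mathbf C})>0$.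
   Context: Here $\Phi$ is (up to the factor in the Lagrange function) the quadratic form arising from the squared norm of the error functional of a quadrature formula $\int_0^1\varphi\,dx\cong\sum_\beta C_\beta\varphi(x_\beta)$ in the space $W_2^{(m,m-1)}(0,1)$ with norm $\left(\int_0^1(\varphi^{(m)}+\varphi^{(m-1)})^2dx\right)^{1/2}$; the condition $S\overline{\mathbf C}=0$ means $\sum_\gamma\overline C_\gamma x_\gamma^\alpha=0$ for $\alpha=0,\dots,m-2$ and $\sum_\gamma\overline C_\gamma e^{-x_\gamma}=0$. *)

theory Defs
  imports Complex_Main
begin

definition G :: "nat \<Rightarrow> real \<Rightarrow> real" where
  "G m x = sgn x / 2 * ((exp x - exp (- x)) / 2
      - (\<Sum>k = 1..m - 1. x ^ (2 * k - 1) / fact (2 * k - 1)))"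

definition Smat :: "nat \<Rightarrow> (nat \<Rightarrow> real) \<Rightarrow> nat \<Rightarrow> nat \<Rightarrow> real" where
  "Smat m x i j = (if i < m - 1 then x j ^ i else exp (- x j))"

definition Phi :: "nat \<Rightarrow> nat \<Rightarrow> (nat \<Rightarrow> real) \<Rightarrow> (nat \<Rightarrow> real) \<Rightarrow> real" where
  "Phi m N x C = 2 * (-1) ^ m * (\<Sum>\<beta> = 0..N. \<Sum>\<gamma> = 0..N. G m (x \<beta> - x \<gamma>) * C \<beta> * C \<gamma>)"

end

theory Submission
  imports Defs "HOL-Analysis.Analysis"
begin


definition EE :: "nat \<Rightarrow> real \<Rightarrow> real" where
  "EE j y = (exp y - (-1)^j * exp (-y)) / 2"
definition QQ :: "nat \<Rightarrow> nat \<Rightarrow> real \<Rightarrow> real" where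
  "QQ m j y = (\<Sum>i<2*m-2-j. (if odd (i+j) then y^i / fact i else 0))"
definition FF :: "nat \<Rightarrow> nat \<Rightarrow> real \<Rightarrow> real" where
  "FF m j y = EE j y - QQ m j y"
definition GD :: "nat \<Rightarrow> nat \<Rightarrow> real \<Rightarrow> real" where
  "GD m j y = sgn y * FF m j y / 2"

lemma poly_deriv:
  "((\<lambda>y. \<Sum>i<n. c i * y^i / fact i) has_real_derivative (\<Sum>i<n-1. c (Suc i) * y^i / fact i)) (at y)"
proof (induction n)
  case 0 then show ?case by simp
next
  case (Suc n)
  have d: "((\<lambda>y. c n * y^n / fact n) has_real_derivative (if n = 0 then 0 else c n * y^(n-1) / fact (n-1))) (at y)"
  proof (cases n)
    case 0 then show ?thesis by simp
  next
    case (Suc k)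
    have "((\<lambda>y. c n * y^n / fact n) has_real_derivative c n * (real n * y^(n-1)) / fact n) (at y)"
      by (auto intro!: derivative_eq_intros)
    moreover have "c n * (real n * y^(n-1)) / fact n = c n * y^(n-1) / fact (n-1)"
    proof -
      have f: "fact n = real n * fact (n-1)" using Suc by simp
      have "real n \<noteq> 0" using Suc by simp
      then show ?thesis unfolding f by (simp add: field_simps)
    qed
    ultimately show ?thesis using Suc by simp
  qed
  have "((\<lambda>y. (\<Sum>i<n. c i * y^i / fact i) + c n * y^n / fact n) has_real_derivative
      (\<Sum>i<n-1. c (Suc i) * y^i / fact i) + (if n = 0 then 0 else c n * y^(n-1) / fact (n-1))) (at y)"
    by (rule DERIV_add[OF Suc.IH d])
  moreover have "(\<Sum>i<n-1. c (Suc i) * y^i / fact i) + (if n = 0 then 0 else c n * y^(n-1) / fact (n-1))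
      = (\<Sum>i<Suc n - 1. c (Suc i) * y^i / fact i)"
    by (cases n) auto
  ultimately show ?case by simp
qed

lemma QQ_deriv: "(QQ m j has_real_derivative QQ m (Suc j) y) (at y)"
proof -
  have "((\<lambda>y. \<Sum>i<2*m-2-j. (if odd (i+j) then 1 else 0) * y^i / fact i) has_real_derivative
     (\<Sum>i<2*m-2-j-1. (if odd (Suc i+j) then 1 else 0) * y^i / fact i)) (at y)"
    by (rule poly_deriv)
  moreover have "2*m-2-j-1 = 2*m-2-Suc j" by simp
  moreover have "QQ m j = (\<lambda>y. \<Sum>i<2*m-2-j. (if odd (i+j) then 1 else 0) * y^i / fact i)"
    by (auto simp: QQ_def fun_eq_iff intro!: sum.cong)
  moreover have "QQ m (Suc j) y = (\<Sum>i<2*m-2-Suc j. (if odd (Suc i+j) then 1 else 0) * y^i / fact i)"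
    by (auto simp: QQ_def intro!: sum.cong)
  ultimately show ?thesis by simp
qed

lemma EE_deriv: "(EE j has_real_derivative EE (Suc j) y) (at y)"
  unfolding EE_def by (auto intro!: derivative_eq_intros simp: algebra_simps)

lemma FF_deriv: "(FF m j has_real_derivative FF m (Suc j) y) (at y)"
  unfolding FF_def[abs_def] by (intro DERIV_diff EE_deriv QQ_deriv)

lemma FF_zero: assumes "j \<le> 2*m-2" shows "FF m j 0 = 0"
proof (cases "j < 2*m-2")
  case True
  then obtain k where k: "2*m-2-j = Suc k" by (metis less_imp_Suc_add zero_less_diff add_diff_cancel_left')
  have "QQ m j 0 = (if odd j then 1 else 0)"
    unfolding QQ_def k sum.lessThan_Suc_shift by (auto intro!: sum.neutral)
  then show ?thesis unfolding FF_def EE_def by auto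
next
  case False
  then have "j = 2*m-2" using assms by simp
  then have "even j" by simp
  then show ?thesis using \<open>j = 2*m-2\<close> unfolding FF_def EE_def QQ_def by simp
qed

lemma sgn_mult_deriv0:
  assumes "(f has_real_derivative 0) (at 0)" "f 0 = 0"
  shows "((\<lambda>y. sgn y * f y / 2) has_real_derivative 0) (at 0)"
proof -
  have "((\<lambda>h. (f (0 + h) - f 0) / h) \<longlongrightarrow> 0) (at 0)"
    using assms(1) unfolding DERIV_def .
  then have l: "((\<lambda>h. f h / h) \<longlongrightarrow> 0) (at 0)" using assms(2) by simp
  have "((\<lambda>h. sgn h * f h / 2 / h) \<longlongrightarrow> 0) (at 0)"
  proof (rule Lim_null_comparison)
    have "norm (sgn h * f h / 2 / h) \<le> \<bar>f h / h\<bar>" for h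
      by (cases "h = 0") (auto simp: abs_mult abs_sgn_eq field_simps)
    then show "\<forall>\<^sub>F h in at 0. norm (sgn h * f h / 2 / h) \<le> \<bar>f h / h\<bar>"
      by (intro always_eventually) auto
    show "((\<lambda>h. \<bar>f h / h\<bar>) \<longlongrightarrow> 0) (at 0)"
      using tendsto_rabs_zero[OF l] .
  qed
  then show ?thesis unfolding DERIV_def by simp
qed

lemma GD_deriv:
  assumes "j < m" "m \<ge> 2"
  shows "(GD m j has_real_derivative GD m (Suc j) y) (at y)"
proof -
  consider "y > 0" | "y < 0" | "y = 0" by linarith
  then show ?thesis
  proof cases
    case 1
    have d: "((\<lambda>z. FF m j z / 2) has_real_derivative FF m (Suc j) y / 2) (at y)"
      using FF_deriv[of m j y] by (auto intro!: derivative_eq_intros)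
    show ?thesis
    proof (rule has_field_derivative_transform_within_open[OF _ open_greaterThan[of 0]])
      show "((\<lambda>z. FF m j z / 2) has_field_derivative GD m (Suc j) y) (at y)"
        using d 1 by (simp add: GD_def)
    qed (use 1 in \<open>auto simp: GD_def\<close>)
  next
    case 2
    have d: "((\<lambda>z. - FF m j z / 2) has_real_derivative - FF m (Suc j) y / 2) (at y)"
      using FF_deriv[of m j y] by (auto intro!: derivative_eq_intros)
    show ?thesis
    proof (rule has_field_derivative_transform_within_open[OF _ open_lessThan[of 0]])
      show "((\<lambda>z. - FF m j z / 2) has_field_derivative GD m (Suc j) y) (at y)"
        using d 2 by (simp add: GD_def)
    qed (use 2 in \<open>auto simp: GD_def\<close>)
  next
    case 3
    have z1: "FF m (Suc j) 0 = 0" using assms by (intro FF_zero) simp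
    have z0: "FF m j 0 = 0" using assms by (intro FF_zero) simp
    have "((\<lambda>y. sgn y * FF m j y / 2) has_real_derivative 0) (at 0)"
      using sgn_mult_deriv0[of "FF m j", OF _ z0] FF_deriv[of m j 0] z1 by simp
    then show ?thesis using 3 by (simp add: GD_def[abs_def])
  qed
qed

lemma odd_sum_reindex:
  "(\<Sum>i<2*n. if odd i then y^i / fact i else 0) = (\<Sum>k=1..n. (y::real)^(2*k-1) / fact (2*k-1))"
proof (induction n)
  case 0 then show ?case by simp
next
  case (Suc n)
  have "(\<Sum>i<2*Suc n. if odd i then y^i / fact i else 0) =
        (\<Sum>i<2*n. if odd i then y^i / fact i else 0) + y^(2*n+1) / fact (2*n+1)"
    by simp
  also have "\<dots> = (\<Sum>k=1..Suc n. y^(2*k-1) / fact (2*k-1))"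
    using Suc by simp
  finally show ?case .
qed

lemma G_eq_GD: "G m = GD m 0"
proof -
  have "QQ m 0 y = (\<Sum>k=1..m-1. y^(2*k-1) / fact (2*k-1))" for y
    using odd_sum_reindex[where n="m-1" and y=y] unfolding QQ_def
    by (simp add: right_diff_distrib')
  then show ?thesis
    by (auto simp: fun_eq_iff G_def GD_def FF_def EE_def)
qed

lemma LG_eq:
  assumes "m \<ge> 2"
  shows "GD m m y + GD m (m-1) y = sgn y * (exp y - (\<Sum>i<m-1. y^i / fact i)) / 2"
proof -
  obtain k where k: "m = Suc (Suc k)" using assms by (metis add_2_eq_Suc le_Suc_ex)
  have e: "EE m y + EE (m-1) y = exp y"
    unfolding EE_def k by (simp add: field_simps)
  have q: "QQ m m y + QQ m (m-1) y = (\<Sum>i<m-1. y^i / fact i)"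
  proof -
    have "QQ m m y = (\<Sum>i<k. if odd (i+k) then y^i / fact i else 0)"
      unfolding QQ_def k by (auto intro!: sum.cong)
    moreover have "QQ m (m-1) y = (\<Sum>i<Suc k. if even (i+k) then y^i / fact i else 0)"
      unfolding QQ_def k by (auto intro!: sum.cong)
    moreover have "(\<Sum>i<k. if odd (i+k) then y^i / fact i else 0) =
        (\<Sum>i<Suc k. if odd (i+k) then y^i / fact i else 0)" by simp
    ultimately have "QQ m m y + QQ m (m-1) y = (\<Sum>i<Suc k. (if odd (i+k) then y^i / fact i else 0) + (if even (i+k) then y^i / fact i else 0))"
      by (simp add: sum.distrib)
    also have "\<dots> = (\<Sum>i<Suc k. y^i / fact i)" by (intro sum.cong) auto
    finally show ?thesis using k by simp
  qed
  have "GD m m y + GD m (m-1) y = sgn y * ((EE m y + EE (m-1) y) - (QQ m m y + QQ m (m-1) y)) / 2"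
    unfolding GD_def FF_def by (simp add: field_simps)
  then show ?thesis unfolding e q .
qed



definition gk :: "nat \<Rightarrow> real \<Rightarrow> real" where
  "gk m s = (-1)^(m-1) * (exp (-s) - (\<Sum>k<m-1. (-s)^k / fact k))"

lemma telescope:
  "(\<Sum>k<n. (-1)^k * (\<psi> (n-k) + \<psi> (n-k-1))) = \<psi> n - (-1)^n * (\<psi> 0 :: real)"
proof (induction n)
  case 0 then show ?case by simp
next
  case (Suc n)
  have "(\<Sum>k<Suc n. (-1)^k * (\<psi> (Suc n-k) + \<psi> (Suc n-k-1))) =
     (\<psi> (Suc n) + \<psi> n) + (\<Sum>k<n. (-1)^(Suc k) * (\<psi> (n-k) + \<psi> (n-k-1)))"
    unfolding sum.lessThan_Suc_shift by simp
  also have "\<dots> = (\<psi> (Suc n) + \<psi> n) - (\<Sum>k<n. (-1)^k * (\<psi> (n-k) + \<psi> (n-k-1)))"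
    by (simp add: sum_negf)
  finally show ?case using Suc by simp
qed

lemma m1sq: "(-1::real)^n * (-1)^n = 1"
  by (simp add: power_mult_distrib[symmetric])

lemma peano:
  fixes \<phi> :: "nat \<Rightarrow> real \<Rightarrow> real"
  assumes m2: "m \<ge> 2"
    and der: "\<And>j t. j < m \<Longrightarrow> t \<in> {0..1} \<Longrightarrow> (\<phi> j has_real_derivative \<phi> (Suc j) t) (at t within {0..1})"
    and a: "a \<in> {0..1}"
  shows "((\<lambda>t. gk m (a-t) * (\<phi> m t + \<phi> (m-1) t)) has_integral
     \<phi> 0 a - (-1)^(m-1) * (exp (-a) * \<phi> (m-1) 0 -
        (\<Sum>k<m-1. (-1)^k * (\<Sum>i<Suc k. a^i/fact i * (\<phi> (m - Suc k + i) 0 + \<phi> (m - 1 - Suc k + i) 0))))) {0..a}"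
proof -
  have a0: "0 \<le> a" and a1: "a \<le> 1" using a by auto
  have derv: "(\<phi> j has_vector_derivative \<phi> (Suc j) t) (at t within {0..a})" if "j < m" "t \<in> {0..a}" for j t
  proof -
    have "(\<phi> j has_real_derivative \<phi> (Suc j) t) (at t within {0..1})"
      using der[of j t] that a1 by auto
    then have "(\<phi> j has_real_derivative \<phi> (Suc j) t) (at t within {0..a})"
      by (rule DERIV_subset) (use a1 in auto)
    then show ?thesis by (simp add: has_real_derivative_iff_has_vector_derivative)
  qed
  have A: "((\<lambda>t. exp (t-a) * (\<phi> m t + \<phi> (m-1) t)) has_integral (\<phi> (m-1) a - exp (-a) * \<phi> (m-1) 0)) {0..a}"
  proof -
    have "((\<lambda>t. exp (t-a) * \<phi> (m-1) t) has_vector_derivative exp (t-a) * (\<phi> m t + \<phi> (m-1) t)) (at t within {0..a})"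
      if "t \<in> {0..a}" for t
    proof -
      have d: "(\<phi> (m-1) has_real_derivative \<phi> m t) (at t within {0..a})"
      proof -
        have "Suc (m-1) = m" using m2 by simp
        moreover have "(\<phi> (m-1) has_vector_derivative \<phi> (Suc (m-1)) t) (at t within {0..a})"
          by (rule derv) (use that m2 in auto)
        ultimately show ?thesis by (metis has_real_derivative_iff_has_vector_derivative)
      qed
      have e: "((\<lambda>t. exp (t-a)) has_real_derivative exp (t-a)) (at t within {0..a})"
        by (auto intro!: derivative_eq_intros)
      have "((\<lambda>t. exp (t-a) * \<phi> (m-1) t) has_real_derivative exp (t-a) * \<phi> (m-1) t + \<phi> m t * exp (t-a)) (at t within {0..a})"
        by (rule DERIV_mult[OF e d])
      then show ?thesis by (simp add: has_real_derivative_iff_has_vector_derivative algebra_simps)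
    qed
    from fundamental_theorem_of_calculus[OF a0 this]
    show ?thesis by (simp add: exp_minus_inverse[symmetric])
  qed
  have T: "((\<lambda>t. (a-t)^k/fact k * \<phi> n t) has_integral
     (\<phi> (n - Suc k) a - (\<Sum>i<Suc k. a^i/fact i * \<phi> (n - Suc k + i) 0))) {0..a}"
    if "Suc k \<le> n" "n \<le> m" for k n
  proof -
    have "((\<lambda>x. ((a - x) ^ (Suc k - 1) / fact (Suc k - 1)) *\<^sub>R (\<lambda>i. \<phi> (n - Suc k + i)) (Suc k) x) has_integral
       (\<lambda>i. \<phi> (n - Suc k + i)) 0 a - (\<Sum>i<Suc k. ((a - 0) ^ i / fact i) *\<^sub>R (\<lambda>i. \<phi> (n - Suc k + i)) i 0)) {0..a}"
    proof (rule Taylor_has_integral)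
      show "(\<phi> (n - Suc k + j) has_vector_derivative \<phi> (n - Suc k + Suc j) t) (at t within {0..a})"
        if "j < Suc k" "0 \<le> t" "t \<le> a" for j t
        using derv[of "n - Suc k + j" t] that \<open>Suc k \<le> n\<close> \<open>n \<le> m\<close> by simp
    qed (use a0 in auto)
    then show ?thesis using that by simp
  qed
  define S where "S n k = (\<Sum>i<Suc k. a^i/fact i * \<phi> (n - Suc k + i) 0)" for n k
  have B: "((\<lambda>t. \<Sum>k<m-1. (-1)^k * ((a-t)^k/fact k * \<phi> m t + (a-t)^k/fact k * \<phi> (m-1) t)) has_integral
      (\<Sum>k<m-1. (-1)^k * ((\<phi> (m - Suc k) a - S m k) + (\<phi> (m - 1 - Suc k) a - S (m-1) k)))) {0..a}"
  proof (rule has_integral_sum, simp, rule has_integral_mult_right, rule has_integral_add)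
    fix k assume "k \<in> {..<m-1}"
    then have k: "Suc k \<le> m - 1" by auto
    show "((\<lambda>t. (a-t)^k/fact k * \<phi> m t) has_integral (\<phi> (m - Suc k) a - S m k)) {0..a}"
      unfolding S_def using T[of k m] k by simp
    show "((\<lambda>t. (a-t)^k/fact k * \<phi> (m-1) t) has_integral (\<phi> (m - 1 - Suc k) a - S (m-1) k)) {0..a}"
      unfolding S_def using T[of k "m-1"] k by simp
  qed
  have C: "((\<lambda>t. (-1)^(m-1) * (exp (t-a) * (\<phi> m t + \<phi> (m-1) t) -
        (\<Sum>k<m-1. (-1)^k * ((a-t)^k/fact k * \<phi> m t + (a-t)^k/fact k * \<phi> (m-1) t)))) has_integral
      (-1)^(m-1) * ((\<phi> (m-1) a - exp (-a) * \<phi> (m-1) 0) -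
        (\<Sum>k<m-1. (-1)^k * ((\<phi> (m - Suc k) a - S m k) + (\<phi> (m - 1 - Suc k) a - S (m-1) k))))) {0..a}"
    by (intro has_integral_mult_right has_integral_diff A B)
  have integrand: "gk m (a-t) * (\<phi> m t + \<phi> (m-1) t) = (-1)^(m-1) * (exp (t-a) * (\<phi> m t + \<phi> (m-1) t) -
        (\<Sum>k<m-1. (-1)^k * ((a-t)^k/fact k * \<phi> m t + (a-t)^k/fact k * \<phi> (m-1) t)))" for t
  proof -
    have pm: "(t-a)^k/fact k * (\<phi> m t + \<phi> (m-1) t) = (-1)^k * ((a-t)^k/fact k * \<phi> m t + (a-t)^k/fact k * \<phi> (m-1) t)" for k
    proof -
      have pm: "(t-a)^k = (-1)^k * (a-t)^k"
        by (metis minus_diff_eq power_minus)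
      show ?thesis by (simp add: pm field_simps)
    qed
    have s: "(\<Sum>k<m-1. (t-a)^k/fact k) * (\<phi> m t + \<phi> (m-1) t) = (\<Sum>k<m-1. (-1)^k * ((a-t)^k/fact k * \<phi> m t + (a-t)^k/fact k * \<phi> (m-1) t))"
      unfolding sum_distrib_right pm ..
    have "gk m (a-t) * (\<phi> m t + \<phi> (m-1) t) = (-1)^(m-1) * (exp (t-a) * (\<phi> m t + \<phi> (m-1) t) - (\<Sum>k<m-1. (t-a)^k/fact k) * (\<phi> m t + \<phi> (m-1) t))"
      unfolding gk_def by (simp add: algebra_simps)
    then show ?thesis unfolding s .
  qed
  have split: "(\<Sum>k<m-1. (-1)^k * ((\<phi> (m - Suc k) a - S m k) + (\<phi> (m - 1 - Suc k) a - S (m-1) k)))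
     = (\<Sum>k<m-1. (-1)^k * (\<phi> (m - 1 - k) a + \<phi> (m - 1 - k - 1) a)) - (\<Sum>k<m-1. (-1)^k * (S m k + S (m-1) k))"
    by (simp add: sum_subtractf[symmetric] algebra_simps)
  have tel: "(\<Sum>k<m-1. (-1)^k * (\<phi> (m - 1 - k) a + \<phi> (m - 1 - k - 1) a)) = \<phi> (m-1) a - (-1)^(m-1) * \<phi> 0 a"
    using telescope[where n="m-1" and \<psi>="\<lambda>j. \<phi> j a"] by simp
  have Sform: "S m k + S (m-1) k = (\<Sum>i<Suc k. a^i/fact i * (\<phi> (m - Suc k + i) 0 + \<phi> (m - 1 - Suc k + i) 0))" for k
    unfolding S_def by (simp add: sum.distrib algebra_simps)
  have val: "(-1)^(m-1) * ((\<phi> (m-1) a - exp (-a) * \<phi> (m-1) 0) -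
        (\<Sum>k<m-1. (-1)^k * ((\<phi> (m - Suc k) a - S m k) + (\<phi> (m - 1 - Suc k) a - S (m-1) k))))
     = \<phi> 0 a - (-1)^(m-1) * (exp (-a) * \<phi> (m-1) 0 -
        (\<Sum>k<m-1. (-1)^k * (\<Sum>i<Suc k. a^i/fact i * (\<phi> (m - Suc k + i) 0 + \<phi> (m - 1 - Suc k + i) 0))))"
    unfolding split tel Sform[symmetric] using m1sq[of "m-1"] by (simp add: algebra_simps)
  show ?thesis using C unfolding integrand[symmetric] val .
qed



definition ann :: "nat set \<Rightarrow> (nat \<Rightarrow> real) \<Rightarrow> (nat \<Rightarrow> real) \<Rightarrow> (real \<Rightarrow> real) \<Rightarrow> bool" where
  "ann I C x f \<longleftrightarrow> (\<Sum>j\<in>I. C j * f (x j)) = 0"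

lemma ann_add: "ann I C x f \<Longrightarrow> ann I C x g \<Longrightarrow> ann I C x (\<lambda>a. f a + g a)"
  unfolding ann_def by (simp add: distrib_left sum.distrib)

lemma ann_diff: "ann I C x f \<Longrightarrow> ann I C x g \<Longrightarrow> ann I C x (\<lambda>a. f a - g a)"
  unfolding ann_def by (simp add: right_diff_distrib sum_subtractf)

lemma ann_cmul: "ann I C x f \<Longrightarrow> ann I C x (\<lambda>a. c * f a)"
  unfolding ann_def by (simp add: sum_distrib_left[symmetric] algebra_simps)

lemma ann_cmulr: "ann I C x f \<Longrightarrow> ann I C x (\<lambda>a. f a * c)"
  using ann_cmul[of I C x f c] by (simp add: mult.commute)

lemma ann_sum: "finite K \<Longrightarrow> (\<And>k. k \<in> K \<Longrightarrow> ann I C x (f k)) \<Longrightarrow> ann I C x (\<lambda>a. \<Sum>k\<in>K. f k a)"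
  unfolding ann_def sum_distrib_left by (subst sum.swap) simp

lemma ann_div: "ann I C x f \<Longrightarrow> ann I C x (\<lambda>a. f a / c)"
  using ann_cmul[of I C x f "1/c"] by simp

lemma ann_binom:
  assumes pw: "\<And>i. i \<le> k \<Longrightarrow> ann I C x (\<lambda>a. a^i)"
  shows "ann I C x (\<lambda>a. (t - a)^k)"
proof -
  have e: "(t - a)^k = (\<Sum>i\<le>k. of_nat (k choose i) * ((-1)^i * a^i) * t^(k-i))" for a :: real
  proof -
    have ta: "t - a = -a + t" by simp
    have "(t - a)^k = (-a + t)^k" by (simp only: ta)
    also have "\<dots> = (\<Sum>i\<le>k. of_nat (k choose i) * (-a)^i * t^(k-i))" by (rule binomial_ring)
    also have "\<dots> = (\<Sum>i\<le>k. of_nat (k choose i) * ((-1)^i * a^i) * t^(k-i))" by (simp only: power_minus[of a])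
    finally show ?thesis .
  qed
  show ?thesis unfolding e
    by (intro ann_sum ann_cmul ann_cmulr pw) auto
qed

lemma gk0: "m \<ge> 2 \<Longrightarrow> gk m 0 = 0"
proof -
  assume "m \<ge> 2"
  then have k: "m - 1 = Suc (m - 2)" by arith
  show ?thesis unfolding gk_def k sum.lessThan_Suc_shift by (auto intro!: sum.neutral)
qed

lemma gk_nz: assumes "m \<ge> 2" "s > 0" shows "gk m s \<noteq> 0"
proof -
  obtain u where u: "exp (-s) = (\<Sum>k<m-1. (-s)^k / fact k) + (exp u / fact (m-1)) * (-s)^(m-1)"
    using Maclaurin_exp_lt[of "-s" "m-1"] assms by auto
  have "exp (-s) - (\<Sum>k<m-1. (-s)^k / fact k) \<noteq> 0"
    using u assms by simp
  then show ?thesis unfolding gk_def by simp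
qed

lemma extend01:
  assumes a: "a \<in> {0..1}" and m: "m \<ge> 2"
    and h: "((\<lambda>t. gk m (a-t) * h t) has_integral v) {0..a}"
  shows "((\<lambda>t. gk m (max (a-t) 0) * h t) has_integral v) {0..1}"
proof -
  have 1: "((\<lambda>t. gk m (max (a-t) 0) * h t) has_integral v) {0..a}"
    by (rule has_integral_eq[OF _ h]) auto
  have 2: "((\<lambda>t. gk m (max (a-t) 0) * h t) has_integral 0) {a..1}"
    by (rule has_integral_eq[OF _ has_integral_0]) (auto simp: gk0[OF m])
  show ?thesis using has_integral_combine[OF _ _ 1 2] a by auto
qed

lemma sgn_gk:
  assumes m: "m \<ge> 2"
  shows "sgn (t - c) * gk m (c - t) = gk m (c - t) - 2 * gk m (max (c - t) 0)"
proof -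
  consider "t < c" | "t = c" | "t > c" by linarith
  then show ?thesis
    by cases (auto simp: gk0[OF m] max_def)
qed

lemma LG_gk:
  assumes m: "m \<ge> 2"
  shows "GD m m y + GD m (m-1) y = (-1)^(m-1) * sgn y * gk m (-y) / 2"
proof -
  have e: "exp y - (\<Sum>i<m-1. y^i / fact i) = (-1)^(m-1) * gk m (-y)"
    unfolding gk_def using m1sq[of "m-1"] by (simp add: algebra_simps)
  show ?thesis unfolding LG_eq[OF m] e by (simp add: algebra_simps)
qed

lemma GD_shift_deriv:
  assumes "j < m" "m \<ge> 2"
  shows "((\<lambda>t. GD m j (t - c)) has_real_derivative GD m (Suc j) (t - c)) (at t within S)"
proof -
  have "(GD m j has_real_derivative GD m (Suc j) (t + - c)) (at (t + - c))"
    by (rule GD_deriv[OF assms])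
  then have "((\<lambda>t. GD m j (t + - c)) has_real_derivative GD m (Suc j) (t + - c)) (at t)"
    by (simp only: DERIV_shift)
  then show ?thesis by (simp add: has_field_derivative_at_within)
qed

lemma peano_node:
  assumes m: "m \<ge> 2"
    and pw: "\<And>i. i < m - 1 \<Longrightarrow> ann I C x (\<lambda>a. a^i)"
    and ex: "ann I C x (\<lambda>a. exp (-a))"
  shows "\<exists>p. ann I C x p \<and> (\<forall>a\<in>{0..1}. ((\<lambda>t. gk m (a-t) * (GD m m (t - c) + GD m (m-1) (t - c)))
      has_integral (G m (a - c) - p a)) {0..a})"
proof -
  let ?\<phi> = "\<lambda>j t. GD m j (t - c)"
  define p where "p a = (-1)^(m-1) * (exp (-a) * ?\<phi> (m-1) 0 -
        (\<Sum>k<m-1. (-1)^k * (\<Sum>i<Suc k. a^i/fact i * (?\<phi> (m - Suc k + i) 0 + ?\<phi> (m - 1 - Suc k + i) 0))))" for a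
  have "ann I C x p"
    unfolding p_def
    by (intro ann_cmul ann_diff ann_cmulr ann_div ex ann_sum pw) auto
  moreover have "((\<lambda>t. gk m (a-t) * (GD m m (t - c) + GD m (m-1) (t - c)))
      has_integral (G m (a - c) - p a)) {0..a}" if "a \<in> {0..1}" for a
    unfolding p_def G_eq_GD by (rule peano[of m ?\<phi> a, OF m GD_shift_deriv[OF _ m] that])
  ultimately show ?thesis by blast
qed



lemma LG_kk:
  assumes m: "m \<ge> 2"
  shows "GD m m (t - c) + GD m (m-1) (t - c) = (-1)^(m-1) * (gk m (c-t) - 2 * gk m (max (c-t) 0)) / 2"
proof -
  have "GD m m (t - c) + GD m (m-1) (t - c) = (-1)^(m-1) * (sgn (t - c) * gk m (c - t)) / 2"
    using LG_gk[OF m, of "t - c"] by simp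
  then show ?thesis by (simp only: sgn_gk[OF m])
qed

lemma nonzero_w:
  assumes m: "m \<ge> 2" and fin: "finite I" and inj: "inj_on x I"
    and xI: "\<And>j. j \<in> I \<Longrightarrow> x j \<in> {0..1}"
    and nz: "\<exists>j\<in>I. C j \<noteq> 0"
    and one: "(\<Sum>j\<in>I. C j) = 0"
  shows "\<exists>t\<in>{0..1}. (\<Sum>\<beta>\<in>I. C \<beta> * gk m (max (x \<beta> - t) 0)) \<noteq> 0"
proof -
  define K where "K = {j\<in>I. C j \<noteq> 0}"
  have finK: "finite K" using fin by (simp add: K_def)
  have neK: "K \<noteq> {}" using nz by (auto simp: K_def)
  define a where "a = Max (x ` K)"
  have "a \<in> x ` K" unfolding a_def using finK neK by (intro Max_in) auto
  then obtain b0 where b0: "b0 \<in> K" "x b0 = a" by auto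
  have b0I: "b0 \<in> I" "C b0 \<noteq> 0" using b0 by (auto simp: K_def)
  have le: "x j \<le> a" if "j \<in> K" for j unfolding a_def using finK that by (intro Max_ge) auto
  have lt: "x j < a" if "j \<in> K" "j \<noteq> b0" for j
  proof -
    have "x j \<noteq> x b0" using inj that b0 by (auto simp: K_def inj_on_def)
    then show ?thesis using le[OF that(1)] b0 by simp
  qed
  have a01: "a \<in> {0..1}" using xI b0I b0 by auto
  show ?thesis
  proof (cases "a = 0")
    case True
    have "C j = 0" if "j \<in> I" "j \<noteq> b0" for j
    proof (rule ccontr)
      assume "C j \<noteq> 0"
      then have "j \<in> K" using that by (simp add: K_def)
      then have "x j < 0" using lt that True by auto
      then show False using xI[OF that(1)] by auto
    qed
    then have "(\<Sum>j\<in>I. C j) = (\<Sum>j\<in>I. if j = b0 then C b0 else 0)"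
      by (intro sum.cong) auto
    also have "\<dots> = C b0" using fin b0I by simp
    finally show ?thesis using one b0I by simp
  next
    case False
    then have apos: "a > 0" using a01 by auto
    define b where "b = Max (insert 0 (x ` (K - {b0})))"
    have finB: "finite (insert 0 (x ` (K - {b0})))" using finK by simp
    have b0le: "0 \<le> b" unfolding b_def using finB by (intro Max_ge) auto
    have xjb: "x j \<le> b" if "j \<in> K - {b0}" for j unfolding b_def using finB that by (intro Max_ge) auto
    have blt: "b < a" unfolding b_def using finB apos lt by (subst Max_less_iff) auto
    define t where "t = (a + b) / 2"
    have t01: "t \<in> {0..1}" using b0le blt a01 by (auto simp: t_def)
    have z: "C j * gk m (max (x j - t) 0) = 0" if "j \<in> I" "j \<noteq> b0" for j
    proof (cases "C j = 0")
      case False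
      then have "j \<in> K - {b0}" using that by (simp add: K_def)
      then have "x j - t < 0" using xjb[of j] blt by (auto simp: t_def)
      then show ?thesis by (simp add: max_def gk0[OF m])
    qed simp
    have "(\<Sum>\<beta>\<in>I. C \<beta> * gk m (max (x \<beta> - t) 0)) = (\<Sum>\<beta>\<in>I. if \<beta> = b0 then C b0 * gk m (max (x b0 - t) 0) else 0)"
      using z by (intro sum.cong) auto
    also have "\<dots> = C b0 * gk m (a - t)"
      using fin b0I b0 blt by (simp add: t_def max_def)
    also have "\<dots> \<noteq> 0" using b0I gk_nz[OF m, of "a - t"] blt by (simp add: t_def)
    finally show ?thesis using t01 by blast
  qed
qed

theorem theorem3p1:
  fixes m N :: nat and x C :: "nat \<Rightarrow> real"
  assumes "m \<ge> 2"
    and "\<forall>j \<in> {0..N}. x j \<in> {0..1}"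
    and "inj_on x {0..N}"
    and "\<exists>j \<in> {0..N}. C j \<noteq> 0"
    and "\<forall>i < m. (\<Sum>j = 0..N. Smat m x i j * C j) = 0"
  shows "Phi m N x C > 0"
proof -
  let ?I = "{0..N}"
  have m: "m \<ge> 2" using assms(1) .
  have xI: "\<And>j. j \<in> ?I \<Longrightarrow> x j \<in> {0..1}" using assms(2) by auto
  have pw: "ann ?I C x (\<lambda>a. a^i)" if "i < m - 1" for i
  proof -
    have "(\<Sum>j=0..N. Smat m x i j * C j) = 0" using assms(5) that by auto
    moreover have "Smat m x i j = x j ^ i" for j using that by (simp add: Smat_def)
    ultimately show ?thesis unfolding ann_def by (simp add: mult.commute)
  qed
  have ex: "ann ?I C x (\<lambda>a. exp (-a))"
  proof -
    have "(\<Sum>j=0..N. Smat m x (m-1) j * C j) = 0" using assms(5) m by auto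
    moreover have "Smat m x (m-1) j = exp (- x j)" for j by (simp add: Smat_def)
    ultimately show ?thesis unfolding ann_def by (simp add: mult.commute)
  qed
  have gkann: "ann ?I C x (\<lambda>a. gk m (a - t))" for t
  proof -
    have e: "gk m (a - t) = (-1)^(m-1) * (exp t * exp (-a) - (\<Sum>k<m-1. (t-a)^k/fact k))" for a
      unfolding gk_def by (simp add: exp_add[symmetric])
    show ?thesis unfolding e
      by (intro ann_cmul ann_diff ann_sum ann_div ann_binom pw ex) auto
  qed
  have "\<forall>c. \<exists>p. ann ?I C x p \<and> (\<forall>a\<in>{0..1}. ((\<lambda>t. gk m (a-t) * (GD m m (t - c) + GD m (m-1) (t - c)))
      has_integral (G m (a - c) - p a)) {0..a})"
    using peano_node[OF m pw ex] by blast
  from choice[OF this] obtain P where P0: "\<forall>c. ann ?I C x (P c) \<and> (\<forall>a\<in>{0..1}. ((\<lambda>t. gk m (a-t) * (GD m m (t - c) + GD m (m-1) (t - c)))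
      has_integral (G m (a - c) - P c a)) {0..a})" ..
  have P: "\<And>c. ann ?I C x (P c)"
    "\<And>c a. a \<in> {0..1} \<Longrightarrow> ((\<lambda>t. gk m (a-t) * (GD m m (t - c) + GD m (m-1) (t - c)))
      has_integral (G m (a - c) - P c a)) {0..a}"
    using P0 by auto
  define w where "w t = (\<Sum>\<beta>\<in>?I. C \<beta> * gk m (max (x \<beta> - t) 0))" for t
  have W: "(\<Sum>\<gamma>\<in>?I. C \<gamma> * (GD m m (t - x \<gamma>) + GD m (m-1) (t - x \<gamma>))) = (-1)^m * w t" for t
  proof -
    have "(\<Sum>\<gamma>\<in>?I. C \<gamma> * (GD m m (t - x \<gamma>) + GD m (m-1) (t - x \<gamma>))) =
        (\<Sum>\<gamma>\<in>?I. (-1)^(m-1) / 2 * (C \<gamma> * gk m (x \<gamma> - t)) - (-1)^(m-1) * (C \<gamma> * gk m (max (x \<gamma> - t) 0)))"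
      unfolding LG_kk[OF m] by (intro sum.cong refl) (simp add: field_simps)
    also have "\<dots> = (-1)^(m-1) / 2 * (\<Sum>\<gamma>\<in>?I. C \<gamma> * gk m (x \<gamma> - t)) - (-1)^(m-1) * w t"
      unfolding w_def by (simp add: sum_subtractf sum_distrib_left)
    also have "(\<Sum>\<gamma>\<in>?I. C \<gamma> * gk m (x \<gamma> - t)) = 0" using gkann[of t] by (simp add: ann_def)
    also have "(-1)^(m-1) / 2 * 0 - (-1)^(m-1) * w t = (-1)^m * w t"
    proof -
      have "(-1::real)^m = - ((-1)^(m-1))" using m by (metis Suc_diff_1 less_le_trans pos2 power_Suc mult_minus1)
      then show ?thesis by simp
    qed
    finally show ?thesis .
  qed
  have Ib: "((\<lambda>t. gk m (max (x \<beta> - t) 0) * ((-1)^m * w t)) has_integral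
      (\<Sum>\<gamma>\<in>?I. C \<gamma> * (G m (x \<beta> - x \<gamma>) - P (x \<gamma>) (x \<beta>)))) {0..1}" if b: "\<beta> \<in> ?I" for \<beta>
  proof (rule extend01[OF xI[OF b] m])
    have "((\<lambda>t. \<Sum>\<gamma>\<in>?I. C \<gamma> * (gk m (x \<beta> - t) * (GD m m (t - x \<gamma>) + GD m (m-1) (t - x \<gamma>)))) has_integral
      (\<Sum>\<gamma>\<in>?I. C \<gamma> * (G m (x \<beta> - x \<gamma>) - P (x \<gamma>) (x \<beta>)))) {0..x \<beta>}"
      by (intro has_integral_sum has_integral_mult_right P(2) xI[OF b]) auto
    moreover have "(\<Sum>\<gamma>\<in>?I. C \<gamma> * (gk m (x \<beta> - t) * (GD m m (t - x \<gamma>) + GD m (m-1) (t - x \<gamma>))))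
        = gk m (x \<beta> - t) * ((-1)^m * w t)" for t
      unfolding W[symmetric] sum_distrib_left by (intro sum.cong) auto
    ultimately show "((\<lambda>t. gk m (x \<beta> - t) * ((-1)^m * w t)) has_integral
      (\<Sum>\<gamma>\<in>?I. C \<gamma> * (G m (x \<beta> - x \<gamma>) - P (x \<gamma>) (x \<beta>)))) {0..x \<beta>}"
      by simp
  qed
  define D where "D = (\<Sum>\<beta>=0..N. \<Sum>\<gamma>=0..N. G m (x \<beta> - x \<gamma>) * C \<beta> * C \<gamma>)"
  have all: "((\<lambda>t. \<Sum>\<beta>\<in>?I. C \<beta> * (gk m (max (x \<beta> - t) 0) * ((-1)^m * w t))) has_integral
      (\<Sum>\<beta>\<in>?I. C \<beta> * (\<Sum>\<gamma>\<in>?I. C \<gamma> * (G m (x \<beta> - x \<gamma>) - P (x \<gamma>) (x \<beta>))))) {0..1}"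
    by (intro has_integral_sum has_integral_mult_right Ib) auto
  have int_eq: "(\<Sum>\<beta>\<in>?I. C \<beta> * (gk m (max (x \<beta> - t) 0) * ((-1)^m * w t))) = (-1)^m * (w t)^2" for t
  proof -
    have "(\<Sum>\<beta>\<in>?I. C \<beta> * (gk m (max (x \<beta> - t) 0) * ((-1)^m * w t))) = (\<Sum>\<beta>\<in>?I. C \<beta> * gk m (max (x \<beta> - t) 0)) * ((-1)^m * w t)"
      by (simp add: sum_distrib_right mult.assoc)
    then show ?thesis unfolding w_def[symmetric] by (simp add: power2_eq_square)
  qed
  have Pz: "(\<Sum>\<beta>\<in>?I. \<Sum>\<gamma>\<in>?I. C \<beta> * (C \<gamma> * P (x \<gamma>) (x \<beta>))) = 0"
  proof -
    have "(\<Sum>\<beta>\<in>?I. \<Sum>\<gamma>\<in>?I. C \<beta> * (C \<gamma> * P (x \<gamma>) (x \<beta>))) = (\<Sum>\<gamma>\<in>?I. C \<gamma> * (\<Sum>\<beta>\<in>?I. C \<beta> * P (x \<gamma>) (x \<beta>)))"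
      by (subst sum.swap) (simp add: sum_distrib_left algebra_simps)
    also have "\<dots> = 0" using P(1) by (simp add: ann_def)
    finally show ?thesis .
  qed
  have val_eq: "(\<Sum>\<beta>\<in>?I. C \<beta> * (\<Sum>\<gamma>\<in>?I. C \<gamma> * (G m (x \<beta> - x \<gamma>) - P (x \<gamma>) (x \<beta>)))) = D"
  proof -
    have "(\<Sum>\<beta>\<in>?I. C \<beta> * (\<Sum>\<gamma>\<in>?I. C \<gamma> * (G m (x \<beta> - x \<gamma>) - P (x \<gamma>) (x \<beta>)))) =
       (\<Sum>\<beta>\<in>?I. \<Sum>\<gamma>\<in>?I. G m (x \<beta> - x \<gamma>) * C \<beta> * C \<gamma>) - (\<Sum>\<beta>\<in>?I. \<Sum>\<gamma>\<in>?I. C \<beta> * (C \<gamma> * P (x \<gamma>) (x \<beta>)))"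
      by (simp add: sum_distrib_left sum_subtractf[symmetric] algebra_simps)
    then show ?thesis using Pz by (simp add: D_def)
  qed
  have hJ: "((\<lambda>t. (w t)^2) has_integral (-1)^m * D) {0..1}"
  proof -
    have "((\<lambda>t. (-1)^m * ((-1)^m * (w t)^2)) has_integral (-1)^m * D) {0..1}"
      using has_integral_mult_right[OF all[unfolded int_eq val_eq], of "(-1)^m"] .
    then show ?thesis using m1sq[of m] by (simp add: mult.assoc[symmetric])
  qed
  have Phi_eq: "Phi m N x C = 2 * ((-1)^m * D)"
    unfolding Phi_def D_def by simp
  have cont: "continuous_on {0..1} (\<lambda>t. (w t)^2)"
    unfolding w_def gk_def by (intro continuous_intros) auto
  have nonneg: "0 \<le> (-1)^m * D"
    using has_integral_nonneg[OF hJ] by simp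
  have nz: "(-1)^m * D \<noteq> 0"
  proof
    assume "(-1)^m * D = 0"
    then have "integral {0..1} (\<lambda>t. (w t)^2) = 0" using hJ by (simp add: integral_unique)
    then have "\<forall>t\<in>{0..1}. (w t)^2 = 0"
      using integral_eq_0_iff[OF cont] by simp
    moreover have "\<exists>t\<in>{0..1}. w t \<noteq> 0"
      unfolding w_def
    proof (rule nonzero_w[OF m _ assms(3) xI assms(4)])
      show "(\<Sum>j\<in>?I. C j) = 0" using pw[of 0] m unfolding ann_def by simp
    qed simp
    ultimately show False by auto
  qed
  have pos: "0 < (-1)^m * D" using nonneg nz by linarith
  show ?thesis unfolding Phi_eq using pos by simp
qed


end
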